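(* Let $n\ge 3$, let $u\in\mathbb{Z}_n^\times$, and let $k$ be an integer with $k\not\equiv 0,1\pmod n$. Consider the set $\mathcal{B}=\binom{\mathbb{Z}_n}{3}-f_{u,ku}$. (1) If $n$ is odd, $\mathcal{B}$ is the set of bases of a matroid on $\mathbb{Z}_n$ if and only if $k\not\equiv -1,\,2,\,\tfrac{n+1}{2}\pmod n$. (2) If $n$ is even, $\mathcal{B}$ is the set of bases of a matroid on $\mathbb{Z}_n$ if and only if $k\not\equiv -1,\,2,\,\tfrac{n}{2},\,\tfrac{n}{2}+1\pmod n$. (Such a matroid is invariant under translation, i.e. corresponds to a three-dimensional tropical subrepresentation of $\mathbb{B}[\mathbb{Z}_n]$.)
   Context: $\mathbb{Z}_n$ acts on $\binom{\mathbb{Z}_n}{3}$ (3-element subsets of $\mathbb{Z}_n$) by $x\cdot\{a,b,c\}=\{x+a,x+b,x+c\}$. For $i,j\in\mathbb{Z}_n$ with $0,i,j$ pairwise distinct, $f_{i,j}=\{\{a,a+i,a+j\}\mid a\in\mathbb{Z}_n\}$, an orbit of this action. $\mathbb{Z}_n^\times$ denotes the units of $\mathbb{Z}_n$. *)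

theory Defs
  imports "HOL-Number_Theory.Number_Theory"
begin

text \<open>Z_n is modelled as the set {0..<n} of naturals with arithmetic mod n.\<close>

definition Zn :: "nat \<Rightarrow> nat set" where
  "Zn n = {0..<n}"

definition triples :: "nat \<Rightarrow> nat set set" where
  "triples n = {S. S \<subseteq> Zn n \<and> card S = 3}"

definition orbit_f :: "nat \<Rightarrow> nat \<Rightarrow> nat \<Rightarrow> nat set set" where
  "orbit_f n i j = {{a, (a + i) mod n, (a + j) mod n} | a. a \<in> Zn n}"

definition matroid_bases :: "'a set \<Rightarrow> 'a set set \<Rightarrow> bool" where
  "matroid_bases E B \<longleftrightarrow>
     B \<noteq> {} \<and> (\<forall>X\<in>B. X \<subseteq> E) \<and>
     (\<forall>X\<in>B. \<forall>Y\<in>B. \<forall>x\<in>X - Y. \<exists>y\<in>Y - X. insert y (X - {x}) \<in> B)"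

end

theory Submission
  imports Defs
begin

lemma mod2n: "(x::nat) < 2*n \<Longrightarrow> x mod n = (if x < n then x else x - n)"
  by (simp add: le_mod_geq)

definition T :: "nat \<Rightarrow> nat \<Rightarrow> nat \<Rightarrow> nat set" where
  "T n j a = {a, (a+1) mod n, (a+j) mod n}"

lemma orbit1: "orbit_f n 1 j = T n j ` {0..<n}"
  unfolding orbit_f_def T_def Zn_def by auto

lemma diffs_aux:
  fixes n j s t s' t' :: nat
  shows "\<lbrakk>2 \<le> j; j < n; 3 \<le> n; j \<noteq> 2; j + 1 \<noteq> n; 2 * j \<noteq> n; 2 * j \<noteq> n + 1;
      2 * j \<noteq> n + 2; s \<noteq> t; s' \<noteq> t';
      s = 0 \<or> s = 1 \<or> s = j; t = 0 \<or> t = 1 \<or> t = j; s' = 0 \<or> s' = 1 \<or> s' = j; t' = 0 \<or> t' = 1 \<or> t' = j;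
      s+t' = s'+t \<or> s+t' = s'+t+n \<or> s'+t = s+t'+n\<rbrakk> \<Longrightarrow> s = s'"
  by (elim disjE; presburger)

lemma diffs:
  fixes n j s t s' t' :: nat
  assumes "2 \<le> j" "j < n" "n \<ge> 3"
    "j \<noteq> 2" "j \<noteq> n - 1" "2*j \<noteq> n" "2*j \<noteq> n+1" "2*j \<noteq> n+2"
    "s \<in> {0,1,j}" "t \<in> {0,1,j}" "s' \<in> {0,1,j}" "t' \<in> {0,1,j}" "s \<noteq> t" "s' \<noteq> t'"
    "(s+t') mod n = (s'+t) mod n"
  shows "s = s'"
proof -
  have "s < n" using assms(1-3,9) by auto
  have "t < n" using assms(1-3,10) by auto
  have "s' < n" using assms(1-3,11) by auto
  have "t' < n" using assms(1-3,12) by auto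
  have l: "s+t' < 2*n" "s'+t < 2*n" using \<open>s < n\<close> \<open>t < n\<close> \<open>s' < n\<close> \<open>t' < n\<close> by linarith+
  have d: "s+t' = s'+t \<or> s+t' = s'+t+n \<or> s'+t = s+t'+n"
    using assms(15) unfolding mod2n[OF l(1)] mod2n[OF l(2)] by (auto split: if_splits)
  have c: "s = 0 \<or> s = 1 \<or> s = j" "t = 0 \<or> t = 1 \<or> t = j" "s' = 0 \<or> s' = 1 \<or> s' = j" "t' = 0 \<or> t' = 1 \<or> t' = j"
    using assms(9-12) by auto
  have j1: "j + 1 \<noteq> n" using assms(5) by auto
  show ?thesis by (rule diffs_aux[OF assms(1-4) j1 assms(6-8,13,14) c d])
qed

lemma memT: "a < n \<Longrightarrow> p \<in> T n j a \<Longrightarrow> \<exists>s\<in>{0,1,j}. p = (a+s) mod n"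
  unfolding T_def by auto

lemma share:
  fixes n j a b p q :: nat
  assumes "2 \<le> j" "j < n" "n \<ge> 3"
    "j \<noteq> 2" "j \<noteq> n - 1" "2*j \<noteq> n" "2*j \<noteq> n+1" "2*j \<noteq> n+2"
    "a < n" "b < n" "p \<noteq> q" "p \<in> T n j a" "q \<in> T n j a" "p \<in> T n j b" "q \<in> T n j b"
  shows "a = b"
proof -
  obtain s where s: "s\<in>{0,1,j}" "p = (a+s) mod n" using memT assms by blast
  obtain t where t: "t\<in>{0,1,j}" "q = (a+t) mod n" using memT assms by blast
  obtain s' where s': "s'\<in>{0,1,j}" "p = (b+s') mod n" using memT assms by blast
  obtain t' where t': "t'\<in>{0,1,j}" "q = (b+t') mod n" using memT assms by blast
  have st: "s \<noteq> t" using s t assms by auto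
  have st': "s' \<noteq> t'" using s' t' assms by auto
  have c1: "[a+s = b+s'] (mod n)" using s s' by (simp add: cong_def)
  have c2: "[b+t' = a+t] (mod n)" using t t' by (simp add: cong_def)
  have "[(a+s)+(b+t') = (b+s')+(a+t)] (mod n)" using cong_add[OF c1 c2] .
  then have "[(s+t')+(a+b) = (s'+t)+(a+b)] (mod n)" by (simp add: ac_simps)
  then have "[s+t' = s'+t] (mod n)" using cong_add_rcancel_nat by blast
  then have "s = s'" using diffs[OF assms(1-8) s(1) t(1) s'(1) t'(1) st st'] by (simp add: cong_def)
  then have "[a + s = b + s] (mod n)" using c1 by simp
  then have "[a = b] (mod n)" using cong_add_rcancel_nat by blast
  then show ?thesis using assms by (simp add: cong_def)
qed

lemma nonexc:
  fixes n j :: nat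
  assumes "2 \<le> j" "j < n" "n \<ge> 3"
    "j \<noteq> 2" "j \<noteq> n - 1" "2*j \<noteq> n" "2*j \<noteq> n+1" "2*j \<noteq> n+2"
  shows "matroid_bases (Zn n) (triples n - orbit_f n 1 j)"
proof -
  let ?O = "T n j ` {0..<n}"
  let ?B = "triples n - ?O"
  have n4: "n \<ge> 4" using assms by auto
  have sh: "\<And>a b p q. a < n \<Longrightarrow> b < n \<Longrightarrow> p \<noteq> q \<Longrightarrow> p \<in> T n j a \<Longrightarrow> q \<in> T n j a
     \<Longrightarrow> p \<in> T n j b \<Longrightarrow> q \<in> T n j b \<Longrightarrow> a = b"
    using share[OF assms] by blast
  have ne: "?B \<noteq> {}"
  proof
    assume e: "?B = {}"
    have "{0,1,2} \<in> triples n" "{0,1,3} \<in> triples n" using n4 by (auto simp: triples_def Zn_def)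
    then have "{0,1,2} \<in> ?O" "{0,1,3} \<in> ?O" using e by auto
    then obtain a b where ab: "a < n" "b < n" "{0,1,2} = T n j a" "{0,1,3} = T n j b" by auto
    then have "a = b" using sh[of a b 0 1] by (metis insertI1 insert_commute zero_neq_one)
    then have "{0,1,2} = ({0,1,3}::nat set)" using ab by simp
    moreover have "(3::nat) \<in> {0,1,3}" by simp
    ultimately have "(3::nat) \<in> {0,1,2}" by simp
    then show False by simp
  qed
  have ex: "\<forall>X\<in>?B. \<forall>Y\<in>?B. \<forall>x\<in>X - Y. \<exists>y\<in>Y - X. insert y (X - {x}) \<in> ?B"
  proof (intro ballI, rule ccontr)
    fix X Y x assume X: "X \<in> ?B" and Y: "Y \<in> ?B" and x: "x \<in> X - Y"
      and nex: "\<not> (\<exists>y\<in>Y - X. insert y (X - {x}) \<in> ?B)"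
    let ?P = "X - {x}"
    have fX: "finite X" "card X = 3" "X \<subseteq> Zn n" using X by (auto simp: triples_def intro: card_ge_0_finite)
    have fY: "finite Y" "card Y = 3" "Y \<subseteq> Zn n" using Y by (auto simp: triples_def intro: card_ge_0_finite)
    have cP: "card ?P = 2" using fX x by simp
    have inO: "insert y ?P \<in> ?O" if "y \<in> Y - X" for y
    proof -
      have "insert y ?P \<in> triples n" using that fX fY cP x
        by (auto simp: triples_def card_insert_if)
      then show ?thesis using nex that by blast
    qed
    obtain p q where pq: "?P = {p, q}" "p \<noteq> q" using cP by (meson card_2_iff)
    have "Y - X \<noteq> {}"
    proof
      assume "Y - X = {}"
      then have "Y \<subseteq> X" by auto
      then have "Y = X" using fX fY by (simp add: card_subset_eq)
      then show False using x by auto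
    qed
    then obtain y1 where y1: "y1 \<in> Y - X" by auto
    show False
    proof (cases "\<exists>y2\<in>Y - X. y2 \<noteq> y1")
      case True
      then obtain y2 where y2: "y2 \<in> Y - X" "y2 \<noteq> y1" by auto
      obtain a where a: "a < n" "insert y1 ?P = T n j a" using inO[OF y1] by auto
      obtain b where b: "b < n" "insert y2 ?P = T n j b" using inO[OF y2(1)] by auto
      have "a = b" using sh[of a b p q] a b pq by auto
      then have "insert y1 ?P = insert y2 ?P" using a b by simp
      then show False using y1 y2 by auto
    next
      case False
      then have "Y \<subseteq> insert y1 ?P" using x by auto
      then have "Y = insert y1 ?P" using fY cP y1
        by (metis card_insert_disjoint card_subset_eq finite.insertI finite_Diff fX(1) DiffD2 DiffE numeral_2_eq_2 numeral_3_eq_3 DiffD1 insert_Diff_single insert_iff)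
      then show False using inO[OF y1] Y by auto
    qed
  qed
  show ?thesis unfolding matroid_bases_def orbit1 using ne ex by (auto simp: triples_def)
qed

lemma noexch:
  assumes "X \<in> triples n" "X \<notin> Ob" "Y \<in> triples n" "Y \<notin> Ob" "x \<in> X" "x \<notin> Y"
    "\<forall>y\<in>Y - X. insert y (X - {x}) \<in> Ob"
  shows "\<not> matroid_bases (Zn n) (triples n - Ob)"
  using assms unfolding matroid_bases_def by blast

lemma notT: "X \<noteq> T n j a" if "a \<notin> X" for X
  using that unfolding T_def by auto



lemma case2a:
  assumes "n \<ge> 5"
  shows "\<not> matroid_bases (Zn n) (triples n - orbit_f n 1 2)"
  unfolding orbit1
proof (rule noexch[where X="{1,2,4}" and Y="{0,1,3}" and x="4"])
  have m: "(1+1) mod n = 2" "(1+2) mod n = 3" "(2+1) mod n = 3" "(2+2) mod n = 4" "(4+1) mod n = (if n = 5 then 0 else 5)" "(0+1) mod n = 1" "(0+2) mod n = 2" "(3+1) mod n = 4"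
    using assms by (auto simp: mod2n)
  show "{1,2,4} \<in> triples n" "{0,1,3} \<in> triples n" using assms by (auto simp: triples_def Zn_def card_insert_if)
  show "{1,2,4} \<notin> T n 2 ` {0..<n}"
  proof
    assume "{1,2,4} \<in> T n 2 ` {0..<n}"
    then obtain a where a: "{1,2,4} = T n 2 a" by auto
    have "a \<in> T n 2 a" by (simp add: T_def)
    then have "a \<in> {1,2,4}" using a by simp
    then have "a = 1 \<or> a = 2 \<or> a = 4" by auto
    then show False
    proof (elim disjE)
      assume "a = 1"
      then have eq: "{1,2,4} = T n 2 (1)" using a by simp
      have "(1+2) mod n \<in> T n 2 (1)" by (simp add: T_def)
      moreover have "(1+2) mod n \<notin> {1,2,4}" unfolding m using assms by auto
      ultimately show False using eq by blast
    next
      assume "a = 2"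
      then have eq: "{1,2,4} = T n 2 (2)" using a by simp
      have "(2+1) mod n \<in> T n 2 (2)" by (simp add: T_def)
      moreover have "(2+1) mod n \<notin> {1,2,4}" unfolding m using assms by auto
      ultimately show False using eq by blast
    next
      assume "a = 4"
      then have eq: "{1,2,4} = T n 2 (4)" using a by simp
      have "(4+1) mod n \<in> T n 2 (4)" by (simp add: T_def)
      moreover have "(4+1) mod n \<notin> {1,2,4}" unfolding m using assms by auto
      ultimately show False using eq by blast
    qed
  qed
  show "{0,1,3} \<notin> T n 2 ` {0..<n}"
  proof
    assume "{0,1,3} \<in> T n 2 ` {0..<n}"
    then obtain a where a: "{0,1,3} = T n 2 a" by auto
    have "a \<in> T n 2 a" by (simp add: T_def)
    then have "a \<in> {0,1,3}" using a by simp
    then have "a = 0 \<or> a = 1 \<or> a = 3" by auto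
    then show False
    proof (elim disjE)
      assume "a = 0"
      then have eq: "{0,1,3} = T n 2 (0)" using a by simp
      have "(0+2) mod n \<in> T n 2 (0)" by (simp add: T_def)
      moreover have "(0+2) mod n \<notin> {0,1,3}" unfolding m using assms by auto
      ultimately show False using eq by blast
    next
      assume "a = 1"
      then have eq: "{0,1,3} = T n 2 (1)" using a by simp
      have "(1+1) mod n \<in> T n 2 (1)" by (simp add: T_def)
      moreover have "(1+1) mod n \<notin> {0,1,3}" unfolding m using assms by auto
      ultimately show False using eq by blast
    next
      assume "a = 3"
      then have eq: "{0,1,3} = T n 2 (3)" using a by simp
      have "(3+1) mod n \<in> T n 2 (3)" by (simp add: T_def)
      moreover have "(3+1) mod n \<notin> {0,1,3}" unfolding m using assms by auto
      ultimately show False using eq by blast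
    qed
  qed
  show "(4::nat) \<in> {1,2,4}" "(4::nat) \<notin> {0,1,3}" using assms by auto
  show "\<forall>y\<in>{0,1,3} - {1,2,4}. insert y ({1,2,4} - {4}) \<in> T n 2 ` {0..<n}"
  proof -
    have d: "{0,1,3} - {1,2,4} = ({0,3}::nat set)" "{1,2,4} - {4} = ({1,2}::nat set)" using assms by auto
    have o0: "insert (0) {1,2} = T n 2 (0)" unfolding T_def m using assms by auto
    have p0: "(0) \<in> {0..<n}" using assms by auto
    have o1: "insert (3) {1,2} = T n 2 (1)" unfolding T_def m using assms by auto
    have p1: "(1) \<in> {0..<n}" using assms by auto
    show ?thesis unfolding d using o0 p0 o1 p1 by auto
  qed
qed

lemma case2b:
  assumes "n \<ge> 5"
  shows "\<not> matroid_bases (Zn n) (triples n - orbit_f n 1 (n-1))"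
  unfolding orbit1
proof (rule noexch[where X="{1,2,4}" and Y="{0,1,3}" and x="4"])
  have m: "(1+1) mod n = 2" "(2+1) mod n = 3" "(0+1) mod n = 1" "(3+1) mod n = 4" "(1+(n-1)) mod n = 0" "(2+(n-1)) mod n = 1" "(4+(n-1)) mod n = 3" "(0+(n-1)) mod n = n-1" "(3+(n-1)) mod n = 2"
    using assms by (auto simp: mod2n)
  show "{1,2,4} \<in> triples n" "{0,1,3} \<in> triples n" using assms by (auto simp: triples_def Zn_def card_insert_if)
  show "{1,2,4} \<notin> T n (n-1) ` {0..<n}"
  proof
    assume "{1,2,4} \<in> T n (n-1) ` {0..<n}"
    then obtain a where a: "{1,2,4} = T n (n-1) a" by auto
    have "a \<in> T n (n-1) a" by (simp add: T_def)
    then have "a \<in> {1,2,4}" using a by simp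
    then have "a = 1 \<or> a = 2 \<or> a = 4" by auto
    then show False
    proof (elim disjE)
      assume "a = 1"
      then have eq: "{1,2,4} = T n (n-1) (1)" using a by simp
      have "(1+(n-1)) mod n \<in> T n (n-1) (1)" by (simp add: T_def)
      moreover have "(1+(n-1)) mod n \<notin> {1,2,4}" unfolding m using assms by auto
      ultimately show False using eq by blast
    next
      assume "a = 2"
      then have eq: "{1,2,4} = T n (n-1) (2)" using a by simp
      have "(2+1) mod n \<in> T n (n-1) (2)" by (simp add: T_def)
      moreover have "(2+1) mod n \<notin> {1,2,4}" unfolding m using assms by auto
      ultimately show False using eq by blast
    next
      assume "a = 4"
      then have eq: "{1,2,4} = T n (n-1) (4)" using a by simp
      have "(4+(n-1)) mod n \<in> T n (n-1) (4)" by (simp add: T_def)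
      moreover have "(4+(n-1)) mod n \<notin> {1,2,4}" unfolding m using assms by auto
      ultimately show False using eq by blast
    qed
  qed
  show "{0,1,3} \<notin> T n (n-1) ` {0..<n}"
  proof
    assume "{0,1,3} \<in> T n (n-1) ` {0..<n}"
    then obtain a where a: "{0,1,3} = T n (n-1) a" by auto
    have "a \<in> T n (n-1) a" by (simp add: T_def)
    then have "a \<in> {0,1,3}" using a by simp
    then have "a = 0 \<or> a = 1 \<or> a = 3" by auto
    then show False
    proof (elim disjE)
      assume "a = 0"
      then have eq: "{0,1,3} = T n (n-1) (0)" using a by simp
      have "(0+(n-1)) mod n \<in> T n (n-1) (0)" by (simp add: T_def)
      moreover have "(0+(n-1)) mod n \<notin> {0,1,3}" unfolding m using assms by auto
      ultimately show False using eq by blast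
    next
      assume "a = 1"
      then have eq: "{0,1,3} = T n (n-1) (1)" using a by simp
      have "(1+1) mod n \<in> T n (n-1) (1)" by (simp add: T_def)
      moreover have "(1+1) mod n \<notin> {0,1,3}" unfolding m using assms by auto
      ultimately show False using eq by blast
    next
      assume "a = 3"
      then have eq: "{0,1,3} = T n (n-1) (3)" using a by simp
      have "(3+1) mod n \<in> T n (n-1) (3)" by (simp add: T_def)
      moreover have "(3+1) mod n \<notin> {0,1,3}" unfolding m using assms by auto
      ultimately show False using eq by blast
    qed
  qed
  show "(4::nat) \<in> {1,2,4}" "(4::nat) \<notin> {0,1,3}" using assms by auto
  show "\<forall>y\<in>{0,1,3} - {1,2,4}. insert y ({1,2,4} - {4}) \<in> T n (n-1) ` {0..<n}"
  proof -
    have d: "{0,1,3} - {1,2,4} = ({0,3}::nat set)" "{1,2,4} - {4} = ({1,2}::nat set)" using assms by auto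
    have o0: "insert (0) {1,2} = T n (n-1) (1)" unfolding T_def m using assms by auto
    have p0: "(1) \<in> {0..<n}" using assms by auto
    have o1: "insert (3) {1,2} = T n (n-1) (2)" unfolding T_def m using assms by auto
    have p1: "(2) \<in> {0..<n}" using assms by auto
    show ?thesis unfolding d using o0 p0 o1 p1 by auto
  qed
qed

lemma caseM:
  assumes "n = 2*M" "M \<ge> 3"
  shows "\<not> matroid_bases (Zn n) (triples n - orbit_f n 1 M)"
  unfolding orbit1
proof (rule noexch[where X="{0,M,2}" and Y="{0,1,M+1}" and x="2"])
  have m: "(0+1) mod n = 1" "(0+M) mod n = M" "(M+1) mod n = M+1" "(M+M) mod n = 0" "(2+M) mod n = M+2" "(1+1) mod n = 2" "(M+1+1) mod n = M+2"
    using assms by (auto simp: mod2n)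
  show "{0,M,2} \<in> triples n" "{0,1,M+1} \<in> triples n" using assms by (auto simp: triples_def Zn_def card_insert_if)
  show "{0,M,2} \<notin> T n M ` {0..<n}"
  proof
    assume "{0,M,2} \<in> T n M ` {0..<n}"
    then obtain a where a: "{0,M,2} = T n M a" by auto
    have "a \<in> T n M a" by (simp add: T_def)
    then have "a \<in> {0,M,2}" using a by simp
    then have "a = 0 \<or> a = M \<or> a = 2" by auto
    then show False
    proof (elim disjE)
      assume "a = 0"
      then have eq: "{0,M,2} = T n M (0)" using a by simp
      have "(0+1) mod n \<in> T n M (0)" by (simp add: T_def)
      moreover have "(0+1) mod n \<notin> {0,M,2}" unfolding m using assms by auto
      ultimately show False using eq by blast
    next
      assume "a = M"
      then have eq: "{0,M,2} = T n M (M)" using a by simp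
      have "(M+1) mod n \<in> T n M (M)" by (simp add: T_def)
      moreover have "(M+1) mod n \<notin> {0,M,2}" unfolding m using assms by auto
      ultimately show False using eq by blast
    next
      assume "a = 2"
      then have eq: "{0,M,2} = T n M (2)" using a by simp
      have "(2+M) mod n \<in> T n M (2)" by (simp add: T_def)
      moreover have "(2+M) mod n \<notin> {0,M,2}" unfolding m using assms by auto
      ultimately show False using eq by blast
    qed
  qed
  show "{0,1,M+1} \<notin> T n M ` {0..<n}"
  proof
    assume "{0,1,M+1} \<in> T n M ` {0..<n}"
    then obtain a where a: "{0,1,M+1} = T n M a" by auto
    have "a \<in> T n M a" by (simp add: T_def)
    then have "a \<in> {0,1,M+1}" using a by simp
    then have "a = 0 \<or> a = 1 \<or> a = M+1" by auto
    then show False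
    proof (elim disjE)
      assume "a = 0"
      then have eq: "{0,1,M+1} = T n M (0)" using a by simp
      have "(0+M) mod n \<in> T n M (0)" by (simp add: T_def)
      moreover have "(0+M) mod n \<notin> {0,1,M+1}" unfolding m using assms by auto
      ultimately show False using eq by blast
    next
      assume "a = 1"
      then have eq: "{0,1,M+1} = T n M (1)" using a by simp
      have "(1+1) mod n \<in> T n M (1)" by (simp add: T_def)
      moreover have "(1+1) mod n \<notin> {0,1,M+1}" unfolding m using assms by auto
      ultimately show False using eq by blast
    next
      assume "a = M+1"
      then have eq: "{0,1,M+1} = T n M (M+1)" using a by simp
      have "(M+1+1) mod n \<in> T n M (M+1)" by (simp add: T_def)
      moreover have "(M+1+1) mod n \<notin> {0,1,M+1}" unfolding m using assms by auto
      ultimately show False using eq by blast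
    qed
  qed
  show "(2::nat) \<in> {0,M,2}" "(2::nat) \<notin> {0,1,M+1}" using assms by auto
  show "\<forall>y\<in>{0,1,M+1} - {0,M,2}. insert y ({0,M,2} - {2}) \<in> T n M ` {0..<n}"
  proof -
    have d: "{0,1,M+1} - {0,M,2} = ({1,M+1}::nat set)" "{0,M,2} - {2} = ({0,M}::nat set)" using assms by auto
    have o0: "insert (1) {0,M} = T n M (0)" unfolding T_def m using assms by auto
    have p0: "(0) \<in> {0..<n}" using assms by auto
    have o1: "insert (M+1) {0,M} = T n M (M)" unfolding T_def m using assms by auto
    have p1: "(M) \<in> {0..<n}" using assms by auto
    show ?thesis unfolding d using o0 p0 o1 p1 by auto
  qed
qed

lemma caseM1:
  assumes "n = 2*M" "M \<ge> 3"
  shows "\<not> matroid_bases (Zn n) (triples n - orbit_f n 1 (M+1))"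
  unfolding orbit1
proof (rule noexch[where X="{1,M+1,2}" and Y="{0,M,1}" and x="2"])
  have m: "(0+1) mod n = 1" "(0+(M+1)) mod n = M+1" "(1+1) mod n = 2" "(1+(M+1)) mod n = M+2" "(2+1) mod n = 3" "(M+1) mod n = M+1" "(M+(M+1)) mod n = 1" "(M+1+1) mod n = M+2"
    using assms by (auto simp: mod2n)
  show "{1,M+1,2} \<in> triples n" "{0,M,1} \<in> triples n" using assms by (auto simp: triples_def Zn_def card_insert_if)
  show "{1,M+1,2} \<notin> T n (M+1) ` {0..<n}"
  proof
    assume "{1,M+1,2} \<in> T n (M+1) ` {0..<n}"
    then obtain a where a: "{1,M+1,2} = T n (M+1) a" by auto
    have "a \<in> T n (M+1) a" by (simp add: T_def)
    then have "a \<in> {1,M+1,2}" using a by simp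
    then have "a = 1 \<or> a = M+1 \<or> a = 2" by auto
    then show False
    proof (elim disjE)
      assume "a = 1"
      then have eq: "{1,M+1,2} = T n (M+1) (1)" using a by simp
      have "(1+(M+1)) mod n \<in> T n (M+1) (1)" by (simp add: T_def)
      moreover have "(1+(M+1)) mod n \<notin> {1,M+1,2}" unfolding m using assms by auto
      ultimately show False using eq by blast
    next
      assume "a = M+1"
      then have eq: "{1,M+1,2} = T n (M+1) (M+1)" using a by simp
      have "(M+1+1) mod n \<in> T n (M+1) (M+1)" by (simp add: T_def)
      moreover have "(M+1+1) mod n \<notin> {1,M+1,2}" unfolding m using assms by auto
      ultimately show False using eq by blast
    next
      assume "a = 2"
      then have eq: "{1,M+1,2} = T n (M+1) (2)" using a by simp
      have "(2+1) mod n \<in> T n (M+1) (2)" by (simp add: T_def)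
      moreover have "(2+1) mod n \<notin> {1,M+1,2}" unfolding m using assms by auto
      ultimately show False using eq by blast
    qed
  qed
  show "{0,M,1} \<notin> T n (M+1) ` {0..<n}"
  proof
    assume "{0,M,1} \<in> T n (M+1) ` {0..<n}"
    then obtain a where a: "{0,M,1} = T n (M+1) a" by auto
    have "a \<in> T n (M+1) a" by (simp add: T_def)
    then have "a \<in> {0,M,1}" using a by simp
    then have "a = 0 \<or> a = M \<or> a = 1" by auto
    then show False
    proof (elim disjE)
      assume "a = 0"
      then have eq: "{0,M,1} = T n (M+1) (0)" using a by simp
      have "(0+(M+1)) mod n \<in> T n (M+1) (0)" by (simp add: T_def)
      moreover have "(0+(M+1)) mod n \<notin> {0,M,1}" unfolding m using assms by auto
      ultimately show False using eq by blast
    next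
      assume "a = M"
      then have eq: "{0,M,1} = T n (M+1) (M)" using a by simp
      have "(M+1) mod n \<in> T n (M+1) (M)" by (simp add: T_def)
      moreover have "(M+1) mod n \<notin> {0,M,1}" unfolding m using assms by auto
      ultimately show False using eq by blast
    next
      assume "a = 1"
      then have eq: "{0,M,1} = T n (M+1) (1)" using a by simp
      have "(1+1) mod n \<in> T n (M+1) (1)" by (simp add: T_def)
      moreover have "(1+1) mod n \<notin> {0,M,1}" unfolding m using assms by auto
      ultimately show False using eq by blast
    qed
  qed
  show "(2::nat) \<in> {1,M+1,2}" "(2::nat) \<notin> {0,M,1}" using assms by auto
  show "\<forall>y\<in>{0,M,1} - {1,M+1,2}. insert y ({1,M+1,2} - {2}) \<in> T n (M+1) ` {0..<n}"
  proof -
    have d: "{0,M,1} - {1,M+1,2} = ({0,M}::nat set)" "{1,M+1,2} - {2} = ({1,M+1}::nat set)" using assms by auto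
    have o0: "insert (0) {1,M+1} = T n (M+1) (0)" unfolding T_def m using assms by auto
    have p0: "(0) \<in> {0..<n}" using assms by auto
    have o1: "insert (M) {1,M+1} = T n (M+1) (M)" unfolding T_def m using assms by auto
    have p1: "(M) \<in> {0..<n}" using assms by auto
    show ?thesis unfolding d using o0 p0 o1 p1 by auto
  qed
qed

lemma caseH:
  assumes "n + 1 = 2*h" "h \<ge> 3"
  shows "\<not> matroid_bases (Zn n) (triples n - orbit_f n 1 h)"
  unfolding orbit1
proof (rule noexch[where X="{1,2,h}" and Y="{0,h,h+1}" and x="2"])
  have m: "(0+1) mod n = 1" "(0+h) mod n = h" "(1+h) mod n = h+1" "(2+h) mod n = (if h = 3 then 0 else h+2)" "(h+1) mod n = h+1" "(h+h) mod n = 1" "(h+1+h) mod n = 2"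
    using assms by (auto simp: mod2n)
  show "{1,2,h} \<in> triples n" "{0,h,h+1} \<in> triples n" using assms by (auto simp: triples_def Zn_def card_insert_if)
  show "{1,2,h} \<notin> T n h ` {0..<n}"
  proof
    assume "{1,2,h} \<in> T n h ` {0..<n}"
    then obtain a where a: "{1,2,h} = T n h a" by auto
    have "a \<in> T n h a" by (simp add: T_def)
    then have "a \<in> {1,2,h}" using a by simp
    then have "a = 1 \<or> a = 2 \<or> a = h" by auto
    then show False
    proof (elim disjE)
      assume "a = 1"
      then have eq: "{1,2,h} = T n h (1)" using a by simp
      have "(1+h) mod n \<in> T n h (1)" by (simp add: T_def)
      moreover have "(1+h) mod n \<notin> {1,2,h}" unfolding m using assms by auto
      ultimately show False using eq by blast
    next
      assume "a = 2"
      then have eq: "{1,2,h} = T n h (2)" using a by simp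
      have "(2+h) mod n \<in> T n h (2)" by (simp add: T_def)
      moreover have "(2+h) mod n \<notin> {1,2,h}" unfolding m using assms by auto
      ultimately show False using eq by blast
    next
      assume "a = h"
      then have eq: "{1,2,h} = T n h (h)" using a by simp
      have "(h+1) mod n \<in> T n h (h)" by (simp add: T_def)
      moreover have "(h+1) mod n \<notin> {1,2,h}" unfolding m using assms by auto
      ultimately show False using eq by blast
    qed
  qed
  show "{0,h,h+1} \<notin> T n h ` {0..<n}"
  proof
    assume "{0,h,h+1} \<in> T n h ` {0..<n}"
    then obtain a where a: "{0,h,h+1} = T n h a" by auto
    have "a \<in> T n h a" by (simp add: T_def)
    then have "a \<in> {0,h,h+1}" using a by simp
    then have "a = 0 \<or> a = h \<or> a = h+1" by auto
    then show False
    proof (elim disjE)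
      assume "a = 0"
      then have eq: "{0,h,h+1} = T n h (0)" using a by simp
      have "(0+1) mod n \<in> T n h (0)" by (simp add: T_def)
      moreover have "(0+1) mod n \<notin> {0,h,h+1}" unfolding m using assms by auto
      ultimately show False using eq by blast
    next
      assume "a = h"
      then have eq: "{0,h,h+1} = T n h (h)" using a by simp
      have "(h+h) mod n \<in> T n h (h)" by (simp add: T_def)
      moreover have "(h+h) mod n \<notin> {0,h,h+1}" unfolding m using assms by auto
      ultimately show False using eq by blast
    next
      assume "a = h+1"
      then have eq: "{0,h,h+1} = T n h (h+1)" using a by simp
      have "(h+1+h) mod n \<in> T n h (h+1)" by (simp add: T_def)
      moreover have "(h+1+h) mod n \<notin> {0,h,h+1}" unfolding m using assms by auto
      ultimately show False using eq by blast
    qed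
  qed
  show "(2::nat) \<in> {1,2,h}" "(2::nat) \<notin> {0,h,h+1}" using assms by auto
  show "\<forall>y\<in>{0,h,h+1} - {1,2,h}. insert y ({1,2,h} - {2}) \<in> T n h ` {0..<n}"
  proof -
    have d: "{0,h,h+1} - {1,2,h} = ({0,h+1}::nat set)" "{1,2,h} - {2} = ({1,h}::nat set)" using assms by auto
    have o0: "insert (0) {1,h} = T n h (0)" unfolding T_def m using assms by auto
    have p0: "(0) \<in> {0..<n}" using assms by auto
    have o1: "insert (h+1) {1,h} = T n h (h)" unfolding T_def m using assms by auto
    have p1: "(h) \<in> {0..<n}" using assms by auto
    show ?thesis unfolding d using o0 p0 o1 p1 by auto
  qed
qed

lemma small3:
  assumes "n = 3" "j = 2"
  shows "\<not> matroid_bases (Zn n) (triples n - orbit_f n 1 j)"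
proof -
  have "triples n \<subseteq> orbit_f n 1 j"
  proof
    fix S assume S: "S \<in> triples n"
    then have "S \<subseteq> {0,1,2}" "card S = 3" using assms by (auto simp: triples_def Zn_def)
    then have "S = {0,1,2}" by (simp add: card_subset_eq)
    moreover have "{0,1,2} = T n j 0" using assms by (auto simp: T_def)
    ultimately show "S \<in> orbit_f n 1 j" unfolding orbit1 using assms by auto
  qed
  then show ?thesis unfolding matroid_bases_def by auto
qed

lemma small4:
  assumes "n = 4" "j = 2 \<or> j = 3"
  shows "\<not> matroid_bases (Zn n) (triples n - orbit_f n 1 j)"
proof -
  have "triples n \<subseteq> orbit_f n 1 j"
  proof
    fix S assume S: "S \<in> triples n"
    then have sub: "S \<subseteq> {0,1,2,3}" and c: "card S = 3" using assms by (auto simp: triples_def Zn_def)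
    have "S \<noteq> {0,1,2,3}" using c by auto
    then obtain z where z: "z \<in> {0,1,2,3::nat}" "z \<notin> S" using sub by blast
    have "S \<subseteq> {0,1,2,3} - {z}" using sub z by auto
    moreover have "card ({0,1,2,3} - {z}) = 3" using z by auto
    ultimately have Sz: "S = {0,1,2,3} - {z}" using c by (simp add: card_subset_eq)
    have t2: "T 4 2 1 = {0,1,2,3} - {0}" "T 4 2 2 = {0,1,2,3} - {1}" "T 4 2 3 = {0,1,2,3} - {2}" "T 4 2 0 = {0,1,2,3} - {3}"
      "T 4 3 2 = {0,1,2,3} - {0}" "T 4 3 3 = {0,1,2,3} - {1}" "T 4 3 0 = {0,1,2,3} - {2}" "T 4 3 1 = {0,1,2,3} - {3}"
      by (auto simp: T_def)
    have "z = 0 \<or> z = 1 \<or> z = 2 \<or> z = 3" using z by auto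
    then have "\<exists>a<4. S = T 4 j a"
      using assms(2) unfolding Sz
      apply (elim disjE)
      apply (metis t2 zero_less_numeral one_less_numeral_iff numeral_less_iff semiring_norm(76) semiring_norm(77) semiring_norm(78) semiring_norm(79) semiring_norm(80) semiring_norm(81) pos2)+
      done
    then show "S \<in> orbit_f n 1 j" unfolding orbit1 using assms by auto
  qed
  then show ?thesis unfolding matroid_bases_def by auto
qed



lemma core:
  assumes "n \<ge> 3" "2 \<le> j" "j < n"
  shows "matroid_bases (Zn n) (triples n - orbit_f n 1 j) \<longleftrightarrow>
    (j \<noteq> 2 \<and> j \<noteq> n - 1 \<and> 2*j \<noteq> n \<and> 2*j \<noteq> n+1 \<and> 2*j \<noteq> n+2)"
proof (cases "j \<noteq> 2 \<and> j \<noteq> n - 1 \<and> 2*j \<noteq> n \<and> 2*j \<noteq> n+1 \<and> 2*j \<noteq> n+2")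
  case True
  then show ?thesis using nonexc[OF assms(2,3,1)] by blast
next
  case False
  have "\<not> matroid_bases (Zn n) (triples n - orbit_f n 1 j)"
  proof (cases "n \<ge> 5")
    case n5: True
    show ?thesis
    proof (cases "j = 2")
      case True then show ?thesis using case2a n5 by simp
    next
      case j2: False
      show ?thesis
      proof (cases "j = n - 1")
        case True then show ?thesis using case2b n5 by simp
      next
        case j3: False
        show ?thesis
        proof (cases "2*j = n")
          case True then show ?thesis using caseM[of n j] n5 by simp
        next
          case j4: False
          show ?thesis
          proof (cases "2*j = n+1")
            case True then show ?thesis using caseH[of n j] n5 by simp
          next
            case j5: False
            then have e: "2*j = n+2" using False j2 j3 j4 by blast
            have "j = (j - 1) + 1" "n = 2*(j-1)" "j - 1 \<ge> 3" using e n5 by arith+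
            then show ?thesis using caseM1[of n "j-1"] by metis
          qed
        qed
      qed
    qed
  next
    case False
    then have "n = 3 \<or> n = 4" using assms by auto
    then show ?thesis
    proof
      assume n3: "n = 3" then have "j = 2" using assms by simp
      then show ?thesis using small3 n3 by simp
    next
      assume n4: "n = 4" then have "j = 2 \<or> j = 3" using assms by auto
      then show ?thesis using small4 n4 by simp
    qed
  qed
  then show ?thesis using False by blast
qed

lemma mat_inv:
  assumes inj: "inj_on f E" and fE: "f ` E = E" and BP: "Bs \<subseteq> Pow E"
  shows "matroid_bases E ((`) f ` Bs) \<longleftrightarrow> matroid_bases E Bs"
proof
  have injP: "inj_on ((`) f) (Pow E)" using inj inj_on_image_Pow by blast
  have del: "f ` (insert y (X - {x})) = insert (f y) (f ` X - {f x})" if "X \<subseteq> E" "x \<in> E" for X x y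
    using inj that by (auto simp: inj_on_def)
  {
    assume m: "matroid_bases E ((`) f ` Bs)"
    show "matroid_bases E Bs" unfolding matroid_bases_def
    proof (intro conjI ballI)
      show "Bs \<noteq> {}" using m unfolding matroid_bases_def by auto
      show "X \<subseteq> E" if "X \<in> Bs" for X using that BP by auto
      fix X Y x assume X: "X \<in> Bs" and Y: "Y \<in> Bs" and x: "x \<in> X - Y"
      have XE: "X \<subseteq> E" "Y \<subseteq> E" using X Y BP by auto
      have fx: "f x \<in> f ` X - f ` Y" using x XE inj by (auto simp: inj_on_def)
      have ex: "\<forall>X\<in>(`) f ` Bs. \<forall>Y\<in>(`) f ` Bs. \<forall>x\<in>X - Y. \<exists>y\<in>Y - X. insert y (X - {x}) \<in> (`) f ` Bs"
        using m unfolding matroid_bases_def by (elim conjE)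
      have "\<exists>y'\<in>f ` Y - f ` X. insert y' (f ` X - {f x}) \<in> (`) f ` Bs"
        using ex[rule_format, OF imageI[OF X] imageI[OF Y] fx] .
      then obtain y' where y': "y' \<in> f ` Y - f ` X" "insert y' (f ` X - {f x}) \<in> (`) f ` Bs"
        by (elim bexE) simp
      then obtain y where y: "y \<in> Y" "y' = f y" by auto
      have yX: "y \<notin> X" using y y' by auto
      obtain Z where Z: "Z \<in> Bs" "insert y' (f ` X - {f x}) = f ` Z" using y' by auto
      have "f ` (insert y (X - {x})) = f ` Z" using Z y del[of X x y] XE x by auto
      moreover have "insert y (X - {x}) \<in> Pow E" "Z \<in> Pow E" using XE y Z BP by auto
      ultimately have "insert y (X - {x}) = Z" using injP by (auto simp: inj_on_def)
      then show "\<exists>y\<in>Y - X. insert y (X - {x}) \<in> Bs" using y yX Z by auto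
    qed
  }
  {
    assume m: "matroid_bases E Bs"
    show "matroid_bases E ((`) f ` Bs)" unfolding matroid_bases_def
    proof (intro conjI ballI)
      show "(`) f ` Bs \<noteq> {}" using m unfolding matroid_bases_def by auto
      show "X' \<subseteq> E" if "X' \<in> (`) f ` Bs" for X' using that BP fE by auto
      fix X' Y' x' assume X': "X' \<in> (`) f ` Bs" and Y': "Y' \<in> (`) f ` Bs" and x': "x' \<in> X' - Y'"
      obtain X where X: "X \<in> Bs" "X' = f ` X" using X' by auto
      obtain Y where Y: "Y \<in> Bs" "Y' = f ` Y" using Y' by auto
      have XE: "X \<subseteq> E" "Y \<subseteq> E" using X Y BP by auto
      obtain x where x: "x \<in> X" "x' = f x" using x' X by auto
      have xY: "x \<notin> Y" using x x' Y by auto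
      have ex: "\<forall>X\<in>Bs. \<forall>Y\<in>Bs. \<forall>x\<in>X - Y. \<exists>y\<in>Y - X. insert y (X - {x}) \<in> Bs"
        using m unfolding matroid_bases_def by (elim conjE)
      have xXY: "x \<in> X - Y" using x xY by simp
      obtain y where y: "y \<in> Y - X" "insert y (X - {x}) \<in> Bs"
        using ex[rule_format, OF X(1) Y(1) xXY] by (elim bexE) simp
      have "f y \<in> Y' - X'" using y XE X Y inj by (auto simp: inj_on_def)
      moreover have "insert (f y) (X' - {x'}) \<in> (`) f ` Bs"
      proof -
        have "x \<in> E" using x XE by auto
        then have "f ` insert y (X - {x}) = insert (f y) (X' - {x'})" using del[OF XE(1)] X x by simp
        then show ?thesis using imageI[OF y(2), of "(`) f"] by simp
      qed
      ultimately show "\<exists>y'\<in>Y' - X'. insert y' (X' - {x'}) \<in> (`) f ` Bs" by blast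
    qed
  }
qed

lemma orbit_gen: "orbit_f n i j = (\<lambda>a. {a, (a+i) mod n, (a+j) mod n}) ` {0..<n}"
  unfolding orbit_f_def Zn_def by auto

lemma transport:
  assumes n: "n \<ge> 3" and cop: "coprime u n" and jj: "(j1*u) mod n = j"
  shows "matroid_bases (Zn n) (triples n - orbit_f n u j) \<longleftrightarrow>
         matroid_bases (Zn n) (triples n - orbit_f n 1 j1)"
proof -
  define f where "f a = (a*u) mod n" for a
  have inj: "inj_on f {0..<n}"
  proof (rule inj_onI)
    fix a b assume a: "a \<in> {0..<n}" and b: "b \<in> {0..<n}" and e: "f a = f b"
    then have "[a*u = b*u] (mod n)" by (simp add: f_def cong_def)
    then have "[a = b] (mod n)" using cong_mult_rcancel_nat cop by blast
    then show "a = b" using a b by (simp add: cong_def)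
  qed
  have fsub: "f ` {0..<n} \<subseteq> {0..<n}" using n by (auto simp: f_def)
  have fE: "f ` {0..<n} = {0..<n}" using endo_inj_surj[OF _ fsub inj] by simp
  have injP: "inj_on ((`) f) (Pow {0..<n})" using inj inj_on_image_Pow by blast
  let ?G = "\<lambda>a. {a, (a+u) mod n, (a+j) mod n}"
  have Gf: "?G (f a) = f ` T n j1 a" if "a < n" for a
  proof -
    have 1: "f ((a+1) mod n) = (f a + u) mod n"
      unfolding f_def by (metis mod_add_left_eq mod_mult_left_eq distrib_right mult_1)
    have 2: "f ((a+j1) mod n) = (f a + j) mod n"
      unfolding f_def by (metis jj mod_add_left_eq mod_add_right_eq mod_mult_left_eq distrib_right)
    have 0: "f a = f a" ..
    show ?thesis unfolding T_def using 1 2 by simp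
  qed
  have O: "orbit_f n u j = (`) f ` orbit_f n 1 j1"
  proof -
    have "orbit_f n u j = ?G ` {0..<n}" by (rule orbit_gen)
    also have "\<dots> = ?G ` (f ` {0..<n})" using fE by simp
    also have "\<dots> = (\<lambda>a. f ` T n j1 a) ` {0..<n}" using Gf by (auto simp: image_image)
    also have "\<dots> = (`) f ` orbit_f n 1 j1" unfolding orbit1 by (simp add: image_image)
    finally show ?thesis .
  qed
  have trP: "triples n \<subseteq> Pow {0..<n}" by (auto simp: triples_def Zn_def)
  have trF: "finite (triples n)" using trP finite_subset by blast
  have trI: "(`) f ` triples n \<subseteq> triples n"
  proof
    fix S' assume "S' \<in> (`) f ` triples n"
    then obtain S where S: "S \<in> triples n" "S' = f ` S" by auto
    then have "S \<subseteq> {0..<n}" "card S = 3" by (auto simp: triples_def Zn_def)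
    moreover have "inj_on f S" using inj inj_on_subset \<open>S \<subseteq> {0..<n}\<close> by blast
    ultimately show "S' \<in> triples n" using S fE by (auto simp: triples_def Zn_def card_image)
  qed
  have trE: "(`) f ` triples n = triples n"
    using endo_inj_surj[OF trF trI] injP inj_on_subset[OF injP trP] by blast
  have OP: "orbit_f n 1 j1 \<subseteq> Pow {0..<n}" unfolding orbit1 using n by (auto simp: T_def)
  have B: "triples n - orbit_f n u j = (`) f ` (triples n - orbit_f n 1 j1)"
  proof -
    have "(`) f ` (triples n - orbit_f n 1 j1) = (`) f ` triples n - (`) f ` orbit_f n 1 j1"
      by (rule inj_on_image_set_diff[OF injP _ OP]) (use trP in auto)
    then show ?thesis unfolding O trE by simp
  qed
  show ?thesis unfolding B Zn_def
    by (rule mat_inv[OF inj fE]) (use trP in auto)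
qed

theorem mainTheorem15:
  fixes n u :: nat and k :: int
  assumes "n \<ge> 3"
    and "u < n" and "coprime u n"
    and "\<not> [k = 0] (mod int n)" and "\<not> [k = 1] (mod int n)"
  defines "B \<equiv> triples n - orbit_f n u (nat ((k * int u) mod int n))"
  shows "(odd n \<longrightarrow>
            (matroid_bases (Zn n) B \<longleftrightarrow>
              \<not> [k = -1] (mod int n) \<and> \<not> [k = 2] (mod int n) \<and>
              \<not> [k = int ((n + 1) div 2)] (mod int n)))
       \<and> (even n \<longrightarrow>
            (matroid_bases (Zn n) B \<longleftrightarrow>
              \<not> [k = -1] (mod int n) \<and> \<not> [k = 2] (mod int n) \<and>
              \<not> [k = int (n div 2)] (mod int n) \<and>
              \<not> [k = int (n div 2) + 1] (mod int n)))"
proof -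
  define j1 where "j1 = nat (k mod int n)"
  have Npos: "int n > 0" using assms(1) by simp
  have j1i: "int j1 = k mod int n" unfolding j1_def using Npos by simp
  have j1n: "j1 < n" using j1i Npos
    by (metis of_nat_less_iff pos_mod_bound)
  have ci: "[k = c] (mod int n) \<longleftrightarrow> j1 = nat c" if "0 \<le> c" "c < int n" for c
  proof -
    have "[k = c] (mod int n) \<longleftrightarrow> k mod int n = c" using that by (simp add: cong_def)
    also have "\<dots> \<longleftrightarrow> j1 = nat c" using j1i that by auto
    finally show ?thesis .
  qed
  have cm1: "[k = -1] (mod int n) \<longleftrightarrow> j1 = n - 1"
  proof -
    have "[k = -1] (mod int n) \<longleftrightarrow> [k = int n - 1] (mod int n)"
      by (simp add: cong_def mod_diff_left_eq[symmetric])
    also have "\<dots> \<longleftrightarrow> j1 = nat (int n - 1)" using ci[of "int n - 1"] assms(1) by simp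
    moreover have "nat (int n - 1) = n - 1" by linarith
    ultimately show ?thesis by simp
  qed
  have c0: "j1 \<noteq> 0" using assms(4) ci[of 0] Npos by simp
  have c1: "j1 \<noteq> 1" using assms(5) ci[of 1] assms(1) by simp
  have c2: "[k = 2] (mod int n) \<longleftrightarrow> j1 = 2" using ci[of 2] assms(1) by simp
  have c3: "[k = int ((n + 1) div 2)] (mod int n) \<longleftrightarrow> j1 = (n+1) div 2"
    using ci[of "int ((n + 1) div 2)"] assms(1) by simp
  have c4: "[k = int (n div 2)] (mod int n) \<longleftrightarrow> j1 = n div 2"
    using ci[of "int (n div 2)"] assms(1) by simp
  have c5: "[k = int (n div 2) + 1] (mod int n) \<longleftrightarrow> j1 = n div 2 + 1"
  proof -
    have "int (n div 2) + 1 < int n" using assms(1) by simp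
    then show ?thesis using ci[of "int (n div 2) + 1"] by (simp add: nat_add_distrib)
  qed
  have jj: "(j1 * u) mod n = nat ((k * int u) mod int n)"
  proof -
    have "int ((j1 * u) mod n) = (int j1 * int u) mod int n" by (simp add: of_nat_mod)
    also have "\<dots> = (k * int u) mod int n" unfolding j1i by (simp add: mod_mult_left_eq)
    finally show ?thesis by simp
  qed
  have "matroid_bases (Zn n) B \<longleftrightarrow> matroid_bases (Zn n) (triples n - orbit_f n 1 j1)"
    unfolding B_def by (rule transport[OF assms(1,3) jj])
  also have "\<dots> \<longleftrightarrow> (j1 \<noteq> 2 \<and> j1 \<noteq> n - 1 \<and> 2*j1 \<noteq> n \<and> 2*j1 \<noteq> n+1 \<and> 2*j1 \<noteq> n+2)"
    using core[OF assms(1) _ j1n] c0 c1 by simp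
  finally have main: "matroid_bases (Zn n) B \<longleftrightarrow> (j1 \<noteq> 2 \<and> j1 \<noteq> n - 1 \<and> 2*j1 \<noteq> n \<and> 2*j1 \<noteq> n+1 \<and> 2*j1 \<noteq> n+2)" .
  show ?thesis
  proof (intro conjI impI)
    assume "odd n"
    then obtain m where m: "n = 2*m+1" by (auto elim: oddE)
    have a: "(n+1) div 2 = m+1" using m by simp
    have b: "2*j1 \<noteq> n" "2*j1 \<noteq> n+2" using m by presburger+
    have c: "2*j1 = n+1 \<longleftrightarrow> j1 = m+1" using m by linarith
    show "matroid_bases (Zn n) B \<longleftrightarrow> \<not> [k = -1] (mod int n) \<and> \<not> [k = 2] (mod int n) \<and>
              \<not> [k = int ((n + 1) div 2)] (mod int n)"
      unfolding main cm1 c2 c3 using a b c by auto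
  next
    assume "even n"
    then obtain m where m: "n = 2*m" by (auto elim: evenE)
    have a: "n div 2 = m" using m by simp
    have b: "2*j1 \<noteq> n+1" using m by presburger
    have c: "2*j1 = n \<longleftrightarrow> j1 = m" "2*j1 = n+2 \<longleftrightarrow> j1 = m+1" using m by linarith+
    show "matroid_bases (Zn n) B \<longleftrightarrow> \<not> [k = -1] (mod int n) \<and> \<not> [k = 2] (mod int n) \<and>
              \<not> [k = int (n div 2)] (mod int n) \<and> \<not> [k = int (n div 2) + 1] (mod int n)"
      unfolding main cm1 c2 c4 c5 using a b c by auto
  qed
qed

end
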